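(* Let $k\ge2$, $n>2^k$, $c=2^k-2$, and assume $d=\gcd(c,n-1)>1$; let $w=(n-1)/d$ and let $y_v=0$ if $v$ is a multiple of $d$ and $y_v=\frac{1}{w(d-1)}$ otherwise, for $v\in\{0,\dots,n-1\}$. For any two disjoint intervals $[u\oplus\ell]_{n-1}$ and $[v\oplus s]_{n-1}$ (with $u,v$ nonnegative integers and $\ell,s$ nonnegative integers), $$y([u\oplus\ell]_{n-1})+y([v\oplus s]_{n-1})\le y([u\oplus(\ell+s+1)]_{n-1}).$$
   Context: For integers $u,\ell$ and $r\ge1$, $[u\oplus\ell]_r=\{w\bmod r: u\le w\le u+\ell-1\}$. For $S\subseteq\{0,\dots,n-1\}$, $y(S)=\sum_{v\in S}y_v$. *)

theory Defs
  imports Complex_Main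
begin

definition cyc_interval :: "nat \<Rightarrow> nat \<Rightarrow> nat \<Rightarrow> nat set" where
  "cyc_interval u l r = {x mod r | x. u \<le> x \<and> x < u + l}"

end

theory Submission
  imports Defs
begin

lemma lt_cdiv_iff:
  fixes d N j :: nat assumes "d>0" shows "j < (N + d - 1) div d \<longleftrightarrow> d*j<N"
proof -
  have "j < (N + d - 1) div d \<longleftrightarrow> \<not> ((N + d - 1) div d < Suc j)" by linarith
  also have "\<dots> \<longleftrightarrow> \<not> (N + d - 1 < Suc j * d)" using div_less_iff_less_mult[OF assms] by simp
  also have "\<dots> \<longleftrightarrow> d*j<N" using assms by (auto simp: algebra_simps)
  finally show ?thesis .
qed

lemma card_mult_lt:
  fixes d N :: nat assumes "d > 0"
  shows "card {x. x < N \<and> d dvd x} = (N + d - 1) div d"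
proof -
  have "{x. x < N \<and> d dvd x} = (\<lambda>j. d * j) ` {..< (N + d - 1) div d}"
  proof (rule set_eqI, rule iffI)
    fix x assume "x \<in> {x. x < N \<and> d dvd x}"
    then obtain j where j: "x = d * j" "d * j < N" by auto
    then have "j \<in> {..< (N + d - 1) div d}" using lt_cdiv_iff[OF assms] by simp
    then show "x \<in> (\<lambda>j. d * j) ` {..< (N + d - 1) div d}" using j by blast
  next
    fix x assume "x \<in> (\<lambda>j. d * j) ` {..< (N + d - 1) div d}"
    then obtain j where j: "x = d * j" "j < (N + d - 1) div d" by auto
    then show "x \<in> {x. x < N \<and> d dvd x}" using lt_cdiv_iff[OF assms] by auto
  qed
  moreover have "inj_on (\<lambda>j. d * j) {..< (N + d - 1) div d}"
    using assms by (auto simp: inj_on_def)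
  ultimately show ?thesis by (simp add: card_image)
qed

lemma card_nonmult_lt:
  fixes d N :: nat assumes "d > 0"
  shows "card {x. x < N \<and> \<not> d dvd x} + (N + d - 1) div d = N"
proof -
  have "{x. x < N \<and> \<not> d dvd x} \<union> {x. x < N \<and> d dvd x} = {..<N}" by auto
  moreover have "card ({x. x < N \<and> \<not> d dvd x} \<union> {x. x < N \<and> d dvd x}) =
     card {x. x < N \<and> \<not> d dvd x} + card {x. x < N \<and> d dvd x}"
    by (rule card_Un_disjoint) auto
  ultimately show ?thesis using card_mult_lt[OF assms, of N] by simp
qed

definition cnt :: "nat \<Rightarrow> nat \<Rightarrow> nat \<Rightarrow> nat" where
  "cnt d u L = card {x. u \<le> x \<and> x < u + L \<and> \<not> d dvd x}"

lemma cnt_formula: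
  fixes d :: nat assumes "d > 0"
  shows "cnt d u L + u + (u + L + d - 1) div d = u + L + (u + d - 1) div d"
proof -
  have "{x. x < u + L \<and> \<not> d dvd x} = {x. x < u \<and> \<not> d dvd x} \<union> {x. u \<le> x \<and> x < u + L \<and> \<not> d dvd x}"
    by auto
  moreover have "card ({x. x < u \<and> \<not> d dvd x} \<union> {x. u \<le> x \<and> x < u + L \<and> \<not> d dvd x})
     = card {x. x < u \<and> \<not> d dvd x} + cnt d u L"
    unfolding cnt_def by (rule card_Un_disjoint) auto
  ultimately have "card {x. x < u + L \<and> \<not> d dvd x} = card {x. x < u \<and> \<not> d dvd x} + cnt d u L"
    by simp
  then show ?thesis
    using card_nonmult_lt[OF assms, of u] card_nonmult_lt[OF assms, of "u+L"] by linarith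
qed

lemma div_lower:
  fixes A s d :: nat assumes "d > 0"
  shows "A div d + s div d \<le> (A + s) div d"
  using div_add1_eq[of A s d] by linarith

lemma div_upper:
  fixes A s d :: nat assumes "d > 0"
  shows "(A + s + 1) div d \<le> A div d + s div d + 1"
proof -
  have e: "A + s + 1 = (A mod d + s mod d + 1) + (A div d + s div d) * d"
    unfolding add_mult_distrib using div_mult_mod_eq[of A d] div_mult_mod_eq[of s d] by linarith
  have "(A + s + 1) div d = ((A mod d + s mod d + 1) + (A div d + s div d) * d) div d"
    by (rule arg_cong[where f="\<lambda>z. z div d"], rule e)
  also have "\<dots> = (A div d + s div d) + (A mod d + s mod d + 1) div d"
    by (rule div_mult_self1) (use assms in simp)
  finally have "(A + s + 1) div d = (A div d + s div d) + (A mod d + s mod d + 1) div d" .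
  moreover have "A mod d + s mod d + 1 < 2 * d"
    using mod_less_divisor[OF assms, of A] mod_less_divisor[OF assms, of s] by linarith
  then have "(A mod d + s mod d + 1) div d < 2"
    by (rule less_mult_imp_div_less)
  ultimately show ?thesis by linarith
qed

lemma cyc_image: "cyc_interval u L m = (\<lambda>x. x mod m) ` {u..<u+L}"
  unfolding cyc_interval_def by auto

lemma cyc_inj:
  fixes u L m :: nat
  assumes "L \<le> m" shows "inj_on (\<lambda>x. x mod m) {u..<u+L}"
proof (rule inj_onI)
  fix x x' assume x: "x \<in> {u..<u+L}" and x': "x' \<in> {u..<u+L}" and e: "x mod m = x' mod m"
  show "x = x'"
  proof (rule ccontr)
    assume "x \<noteq> x'"
    then have "x < x' \<or> x' < x" by auto
    then show False
    proof (elim disjE)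
      assume 1: "x < x'"
      then have "m dvd x' - x" using e mod_eq_dvd_iff_nat[where m=x' and n=x and q=m] by auto
      moreover have "x' - x < m" "x' - x > 0" using x x' 1 assms by auto
      ultimately show False using nat_dvd_not_less by blast
    next
      assume 2: "x' < x"
      then have "m dvd x - x'" using e mod_eq_dvd_iff_nat[where m=x and n=x' and q=m] by auto
      moreover have "x - x' < m" "x - x' > 0" using x x' 2 assms by auto
      ultimately show False using nat_dvd_not_less by blast
    qed
  qed
qed

lemma cyc_sum:
  fixes y :: "nat \<Rightarrow> real"
  assumes "L \<le> m" "m > 0" "d dvd m" "\<And>x. x < m \<Longrightarrow> y x = (if d dvd x then 0 else a)"
  shows "sum y (cyc_interval u L m) = a * real (cnt d u L)"
proof -
  have "sum y (cyc_interval u L m) = (\<Sum>x\<in>{u..<u+L}. y (x mod m))"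
    unfolding cyc_image by (subst sum.reindex[OF cyc_inj[OF assms(1)]]) simp
  also have "\<dots> = (\<Sum>x\<in>{u..<u+L}. if d dvd x then 0 else a)"
  proof (rule sum.cong[OF refl])
    fix x
    have "d dvd x mod m \<longleftrightarrow> d dvd x" using assms(3) by (simp add: dvd_mod_iff)
    then show "y (x mod m) = (if d dvd x then 0 else a)" using assms(2) assms(4)[of "x mod m"] by simp
  qed
  also have "\<dots> = (\<Sum>x\<in>{u..<u+L}. if \<not> d dvd x then a else 0)"
    by (rule sum.cong) auto
  also have "\<dots> = (\<Sum>x\<in>{x\<in>{u..<u+L}. \<not> d dvd x}. a)"
    by (rule sum.inter_filter[symmetric]) simp
  also have "{x\<in>{u..<u+L}. \<not> d dvd x} = {x. u \<le> x \<and> x < u + L \<and> \<not> d dvd x}" by auto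
  finally show ?thesis unfolding cnt_def by simp
qed

lemma cyc_full:
  fixes u L m :: nat
  assumes "m \<le> L" "m > 0"
  shows "cyc_interval u L m = {..<m}"
proof -
  have "r \<in> cyc_interval u L m" if "r < m" for r
  proof -
    define x where "x = u + (r + m - u mod m) mod m"
    have "x < u + m" unfolding x_def using assms by simp
    moreover have "x mod m = (u mod m + (r + m - u mod m)) mod m" unfolding x_def
      by (simp add: mod_add_right_eq mod_add_left_eq)
    moreover have "u mod m + (r + m - u mod m) = r + m" using mod_less_divisor[OF assms(2), of u] by linarith
    ultimately have "x < u + m" "x mod m = r" using that by simp_all
    moreover have "u \<le> x" unfolding x_def by simp
    ultimately have "r = x mod m \<and> u \<le> x \<and> x < u + L" using assms by simp
    then show ?thesis unfolding cyc_interval_def by blast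
  qed
  moreover have "cyc_interval u L m \<subseteq> {..<m}" unfolding cyc_interval_def using assms by auto
  ultimately show ?thesis by auto
qed

theorem lemma3p3:
  fixes k n c d w u v l s :: nat and y :: "nat \<Rightarrow> real"
  assumes "k \<ge> 2" and "n > 2 ^ k" and "c = 2 ^ k - 2"
    and "d = gcd c (n - 1)" and "d > 1"
    and "w = (n - 1) div d"
    and "\<And>i. i < n \<Longrightarrow> y i = (if d dvd i then 0 else 1 / (real w * (real d - 1)))"
    and "cyc_interval u l (n - 1) \<inter> cyc_interval v s (n - 1) = {}"
  shows "sum y (cyc_interval u l (n - 1)) + sum y (cyc_interval v s (n - 1))
           \<le> sum y (cyc_interval u (l + s + 1) (n - 1))"
proof -
  define m where "m = n - 1"
  have "(1::nat) \<le> 2 ^ k" by simp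
  then have mpos: "m > 0" using assms(2) unfolding m_def by linarith
  have dm: "d dvd m" unfolding m_def assms(4) by simp
  have dpos: "d > 0" using assms(5) by simp
  obtain e where de: "d = e + 1" using dpos by (metis Suc_eq_plus1 gr0_implies_Suc)
  define a where "a = 1 / (real w * (real d - 1))"
  have a0: "a \<ge> 0" unfolding a_def using assms(5) by simp
  have hy: "\<And>x. x < m \<Longrightarrow> y x = (if d dvd x then 0 else a)"
    using assms(7) unfolding m_def a_def by simp
  have sub: "\<And>u L. cyc_interval u L m \<subseteq> {..<m}"
    unfolding cyc_interval_def using mpos by auto
  have disj: "cyc_interval u l m \<inter> cyc_interval v s m = {}" using assms(8) unfolding m_def .
  have main: "sum y (cyc_interval u l m) + sum y (cyc_interval v s m) \<le> sum y (cyc_interval u (l + s + 1) m)"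
  proof (cases "m \<le> l + s + 1")
    case True
    have "sum y (cyc_interval u l m) + sum y (cyc_interval v s m)
        = sum y (cyc_interval u l m \<union> cyc_interval v s m)"
      by (rule sum.union_disjoint[symmetric])
        (use disj sub finite_subset[OF sub[of u l]] finite_subset[OF sub[of v s]] in auto)
    also have "\<dots> \<le> sum y {..<m}"
      by (rule sum_mono2) (use sub hy a0 in auto)
    also have "\<dots> = sum y (cyc_interval u (l + s + 1) m)"
      using cyc_full[OF True mpos] by simp
    finally show ?thesis .
  next
    case False
    have s1: "sum y (cyc_interval u (l + s + 1) m) = a * real (cnt d u (l + s + 1))"
      by (rule cyc_sum) (use False mpos dm hy in auto)
    have s2: "sum y (cyc_interval u l m) = a * real (cnt d u l)"
      by (rule cyc_sum) (use False mpos dm hy in auto)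
    have s3: "sum y (cyc_interval v s m) = a * real (cnt d v s)"
      by (rule cyc_sum) (use False mpos dm hy in auto)
    have c1: "cnt d u (l+s+1) + u + (u+l+s+1+e) div d = u+l+s+1 + (u+e) div d"
      using cnt_formula[OF dpos, of u "l+s+1"] by (simp add: de add_ac)
    have c2: "cnt d u l + u + (u+l+e) div d = u+l+(u+e) div d"
      using cnt_formula[OF dpos, of u l] by (simp add: de add_ac)
    have c3: "cnt d v s + v + (v+s+e) div d = v+s+(v+e) div d"
      using cnt_formula[OF dpos, of v s] by (simp add: de add_ac)
    have b1: "(v+e) div d + s div d \<le> (v+s+e) div d"
      using div_lower[OF dpos, of "v+e" s] by (simp add: add_ac)
    have b2: "(u+l+s+1+e) div d \<le> (u+l+e) div d + s div d + 1"
      using div_upper[OF dpos, of "u+l+e" s] by (simp add: add_ac)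
    have "cnt d u l + cnt d v s \<le> cnt d u (l+s+1)"
      using c1 c2 c3 b1 b2 by linarith
    then have "real (cnt d u l) + real (cnt d v s) \<le> real (cnt d u (l+s+1))" by linarith
    then have "a * real (cnt d u l) + a * real (cnt d v s) \<le> a * real (cnt d u (l+s+1))"
      using a0 by (metis distrib_left mult_left_mono)
    then show ?thesis using s1 s2 s3 by simp
  qed
  then show ?thesis unfolding m_def .
qed

end
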